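(* Assume $(X,T)$ has the b.i.p.-property. Then for every $a\in\mathcal W^1$ and a.e. $\omega\in\Omega_a$ there exist $\alpha_\omega,\beta_\omega\in\mathbb N$ such that (i) $\mathcal W^n_\omega(a,b)\ne\emptyset$ for all $n\ge\alpha_\omega$ and all $b\in\mathcal W^1_{\theta^n\omega}$; (ii) $\mathcal W^n_{\theta^{-n}\omega}(b,a)\ne\emptyset$ for all $n\ge\beta_\omega$ and all $b\in\mathcal W^1_{\theta^{-n}\omega}$.
   Context: Let $(\Omega,\mathcal F,P)$ be a probability space and $\theta:\Omega\to\Omega$ an invertible, bimeasurable, $P$-preserving, ergodic map. Let $\ell:\Omega\to\mathbb N\cup\{\infty\}$ be measurable with $\ell_\omega>1$, and for a.e. $\omega$ let $A_\omega=(\alpha_{ij}(\omega))_{0\le i<\ell_\omega,\,0\le j<\ell_{\theta\omega}}$ be a $\{0,1\}$-matrix depending measurably on $\omega$ such that every row contains an entry $1$. Put $X_\omega=\{x=(x_0,x_1,\dots): x_i<\ell_{\theta^i\omega},\ \alpha_{x_ix_{i+1}}(\theta^i\omega)=1\ \forall i\ge0\}$, $T_\omega:X_\omega\to X_{\theta\omega}$ the left shift, $T^n_\omega=T_{\theta^{n-1}\omega}\circ\cdots\circ T_\omega$. A word $w=(w_0,\dots,w_{n-1})$ is $\omega$-admissible if $w_i<\ell_{\theta^i\omega}$ for all $i<n$ and $\alpha_{w_iw_{i+1}}(\theta^i\omega)=1$ for $i<n-1$; $\mathcal W^n_\omega$ is the set of such words of length $n$ (so $\mathcal W^1_\omega=\{c: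 c<\ell_\omega\}$); $[w]_\omega=\{x\in X_\omega: x_i=w_i,\ i<n\}$; $\Omega_w=\{\omega: w\in\mathcal W^n_\omega\}$; $\mathcal W^n$ is the set of words $w$ of length $n$ with $P(\Omega_w)>0$. For $a,b$, $\mathcal W^n_\omega(a,b)=\{w\in\mathcal W^n_\omega: w_0=a,\ \alpha_{w_{n-1}b}(\theta^{n-1}\omega)=1\}$. $(X,T)$ is topologically mixing if for all $a,b\in\mathcal W^1$ there is an $\mathbb N$-valued random variable $N_{ab}$ with $[a]_\omega\cap(T^n_\omega)^{-1}[b]_{\theta^n\omega}\ne\emptyset$ whenever $\omega\in\Omega_a$, $n\ge N_{ab}(\omega)$, $\theta^n\omega\in\Omega_b$. Big image property: there exist a measurable $\Omega_{bi}\subset\Omega$ with $P(\Omega_{bi})>0$ and finite sets $\mathcal I^\omega_{bi}\subset\mathcal W^1_\omega$ ($\omega\in\Omega_{bi}$) such that for every $c\in\mathcal W^1_{\theta^{-1}\omega}$ there is $b\in\mathcal I^\omega_{bi}$ with $\alpha_{cb}(\theta^{-1}\omega)=1$. Big preimage property: there exist a measurable $\Omega_{bp}\subset\Omega$ with $P(\Omega_{bp})>0$ and finite sets $\mathcal I^\omega_{bp}\subset\mathcal W^1_{\theta^{-1}\omega}$ ($\omega\in\Omega_{bp}$) such that for every $c\in\mathcal W^1_\omega$ there is $b\in\mathcal I^\omega_{bp}$ with $\alpha_{bc}(\theta^{-1}\omega)=1$. (Without loss of generality the sets $\mathcal I^\omega_{bi}$, resp. $\mathcal I^\omega_{bp}$,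 are contained in a fixed finite set.) $(X,T)$ has the b.i.p.-property if it is topologically mixing and has both the big image and big preimage property. *)

theory Defs
  imports "HOL-Probability.Probability"
begin

text \<open>The alphabet size
  is l :: 'w => enat (the value \<infinity> allowed); the random transition matrix is
  encoded as a boolean predicate Amat w i j (true iff alpha_ij(w) = 1).
  Symbols are natural numbers; a symbol c is in W^1_w iff enat c < l w.\<close>

definition thinv :: "'w measure \<Rightarrow> ('w \<Rightarrow> 'w) \<Rightarrow> 'w \<Rightarrow> 'w" where
  "thinv M th = inv_into (space M) th"

definition invertible_mp_ergodic :: "'w measure \<Rightarrow> ('w \<Rightarrow> 'w) \<Rightarrow> bool" where
  "invertible_mp_ergodic M th \<longleftrightarrow>
     prob_space M \<and>
     bij_betw th (space M) (space M) \<and>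
     th \<in> measurable M M \<and> thinv M th \<in> measurable M M \<and>
     distr M M th = M \<and>
     (\<forall>A\<in>sets M. th -` A \<inter> space M = A \<longrightarrow> measure M A = 0 \<or> measure M A = 1)"

definition rsft_setting ::
  "'w measure \<Rightarrow> ('w \<Rightarrow> 'w) \<Rightarrow> ('w \<Rightarrow> enat) \<Rightarrow> ('w \<Rightarrow> nat \<Rightarrow> nat \<Rightarrow> bool) \<Rightarrow> bool" where
  "rsft_setting M th l Amat \<longleftrightarrow>
     invertible_mp_ergodic M th \<and>
     l \<in> measurable M (count_space UNIV) \<and>
     (\<forall>w\<in>space M. l w > 1) \<and>
     (\<forall>i j. {w\<in>space M. Amat w i j} \<in> sets M) \<and>
     (AE w in M. \<forall>i. enat i < l w \<longrightarrow> (\<exists>j. enat j < l (th w) \<and> Amat w i j))"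

definition fibre :: "('w \<Rightarrow> 'w) \<Rightarrow> ('w \<Rightarrow> enat) \<Rightarrow> ('w \<Rightarrow> nat \<Rightarrow> nat \<Rightarrow> bool) \<Rightarrow> 'w \<Rightarrow> (nat \<Rightarrow> nat) set" where
  "fibre th l Amat w = {x. \<forall>i. enat (x i) < l ((th ^^ i) w) \<and> Amat ((th ^^ i) w) (x i) (x (Suc i))}"

definition shiftn :: "nat \<Rightarrow> (nat \<Rightarrow> nat) \<Rightarrow> (nat \<Rightarrow> nat)" where
  "shiftn n x = (\<lambda>i. x (i + n))"

definition admissible :: "('w \<Rightarrow> 'w) \<Rightarrow> ('w \<Rightarrow> enat) \<Rightarrow> ('w \<Rightarrow> nat \<Rightarrow> nat \<Rightarrow> bool) \<Rightarrow> 'w \<Rightarrow> nat list \<Rightarrow> bool" where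
  "admissible th l Amat w u \<longleftrightarrow>
     (\<forall>i<length u. enat (u ! i) < l ((th ^^ i) w)) \<and>
     (\<forall>i. Suc i < length u \<longrightarrow> Amat ((th ^^ i) w) (u ! i) (u ! Suc i))"

definition cylinder :: "('w \<Rightarrow> 'w) \<Rightarrow> ('w \<Rightarrow> enat) \<Rightarrow> ('w \<Rightarrow> nat \<Rightarrow> nat \<Rightarrow> bool) \<Rightarrow> 'w \<Rightarrow> nat list \<Rightarrow> (nat \<Rightarrow> nat) set" where
  "cylinder th l Amat w u = {x \<in> fibre th l Amat w. \<forall>i<length u. x i = u ! i}"

definition words :: "('w \<Rightarrow> 'w) \<Rightarrow> ('w \<Rightarrow> enat) \<Rightarrow> ('w \<Rightarrow> nat \<Rightarrow> nat \<Rightarrow> bool) \<Rightarrow> nat \<Rightarrow> 'w \<Rightarrow> nat list set" where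
  "words th l Amat n w = {u. length u = n \<and> admissible th l Amat w u}"

text \<open>W^n_w(a,b) (for n = 0 this is empty, as the word must have a first letter a).\<close>
definition words_ab :: "('w \<Rightarrow> 'w) \<Rightarrow> ('w \<Rightarrow> enat) \<Rightarrow> ('w \<Rightarrow> nat \<Rightarrow> nat \<Rightarrow> bool) \<Rightarrow> nat \<Rightarrow> 'w \<Rightarrow> nat \<Rightarrow> nat \<Rightarrow> nat list set" where
  "words_ab th l Amat n w a b =
     {u \<in> words th l Amat n w. u \<noteq> [] \<and> hd u = a \<and> Amat ((th ^^ (n - 1)) w) (last u) b}"

definition Omega_w :: "'w measure \<Rightarrow> ('w \<Rightarrow> 'w) \<Rightarrow> ('w \<Rightarrow> enat) \<Rightarrow> ('w \<Rightarrow> nat \<Rightarrow> nat \<Rightarrow> bool) \<Rightarrow> nat list \<Rightarrow> 'w set" where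
  "Omega_w M th l Amat u = {w \<in> space M. admissible th l Amat w u}"

definition in_W1 :: "'w measure \<Rightarrow> ('w \<Rightarrow> 'w) \<Rightarrow> ('w \<Rightarrow> enat) \<Rightarrow> ('w \<Rightarrow> nat \<Rightarrow> nat \<Rightarrow> bool) \<Rightarrow> nat \<Rightarrow> bool" where
  "in_W1 M th l Amat a \<longleftrightarrow> measure M (Omega_w M th l Amat [a]) > 0"

definition top_mixing :: "'w measure \<Rightarrow> ('w \<Rightarrow> 'w) \<Rightarrow> ('w \<Rightarrow> enat) \<Rightarrow> ('w \<Rightarrow> nat \<Rightarrow> nat \<Rightarrow> bool) \<Rightarrow> bool" where
  "top_mixing M th l Amat \<longleftrightarrow>
     (\<forall>a b. in_W1 M th l Amat a \<longrightarrow> in_W1 M th l Amat b \<longrightarrow>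
        (\<exists>N :: 'w \<Rightarrow> nat. N \<in> measurable M (count_space UNIV) \<and>
          (\<forall>w \<in> Omega_w M th l Amat [a]. \<forall>n \<ge> N w.
              (th ^^ n) w \<in> Omega_w M th l Amat [b] \<longrightarrow>
              cylinder th l Amat w [a] \<inter> (shiftn n -` cylinder th l Amat ((th ^^ n) w) [b]) \<noteq> {})))"

definition big_image :: "'w measure \<Rightarrow> ('w \<Rightarrow> 'w) \<Rightarrow> ('w \<Rightarrow> enat) \<Rightarrow> ('w \<Rightarrow> nat \<Rightarrow> nat \<Rightarrow> bool) \<Rightarrow> bool" where
  "big_image M th l Amat \<longleftrightarrow>
     (\<exists>Obi \<in> sets M. measure M Obi > 0 \<and>
       (\<exists>I :: 'w \<Rightarrow> nat set. \<forall>w \<in> Obi.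
          finite (I w) \<and> (\<forall>b \<in> I w. enat b < l w) \<and>
          (\<forall>c. enat c < l (thinv M th w) \<longrightarrow> (\<exists>b \<in> I w. Amat (thinv M th w) c b))))"

definition big_preimage :: "'w measure \<Rightarrow> ('w \<Rightarrow> 'w) \<Rightarrow> ('w \<Rightarrow> enat) \<Rightarrow> ('w \<Rightarrow> nat \<Rightarrow> nat \<Rightarrow> bool) \<Rightarrow> bool" where
  "big_preimage M th l Amat \<longleftrightarrow>
     (\<exists>Obp \<in> sets M. measure M Obp > 0 \<and>
       (\<exists>I :: 'w \<Rightarrow> nat set. \<forall>w \<in> Obp.
          finite (I w) \<and> (\<forall>b \<in> I w. enat b < l (thinv M th w)) \<and>
          (\<forall>c. enat c < l w \<longrightarrow> (\<exists>b \<in> I w. Amat (thinv M th w) b c))))"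

definition bip_property :: "'w measure \<Rightarrow> ('w \<Rightarrow> 'w) \<Rightarrow> ('w \<Rightarrow> enat) \<Rightarrow> ('w \<Rightarrow> nat \<Rightarrow> nat \<Rightarrow> bool) \<Rightarrow> bool" where
  "bip_property M th l Amat \<longleftrightarrow>
     top_mixing M th l Amat \<and> big_image M th l Amat \<and> big_preimage M th l Amat"

end

theory Submission imports Defs begin
lemma funpow_meas: "T \<in> measurable M M \<Longrightarrow> (T ^^ n) \<in> measurable M M"
  by (induction n) (auto simp: funpow_swap1)

lemma AE_pres:
  assumes f: "f \<in> measurable M M" and d: "distr M M f = M" and ae: "AE x in M. P x"
  shows "AE x in M. P (f x)"
proof -
  from ae obtain N where N: "{x \<in> space M. \<not> P x} \<subseteq> N" "emeasure M N = 0" "N \<in> sets M"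
    by (rule AE_E)
  have s: "f -` N \<inter> space M \<in> sets M" using f N(3) by (rule measurable_sets)
  have "emeasure M (f -` N \<inter> space M) = emeasure (distr M M f) N"
    using emeasure_distr[OF f N(3)] by simp
  also have "\<dots> = 0" using d N(2) by simp
  finally have "f -` N \<inter> space M \<in> null_sets M" using s by auto
  moreover have "{x \<in> space M. \<not> P (f x)} \<subseteq> f -` N \<inter> space M"
    using N(1) f by (auto dest: measurable_space)
  ultimately show ?thesis by (rule AE_I')
qed

lemma distr_pow:
  assumes f: "f \<in> measurable M M" and d: "distr M M f = M"
  shows "distr M M (f ^^ n) = M"
proof (induction n)
  case 0 then show ?case by (simp add: distr_id[unfolded id_def])
next
  case (Suc n)
  have "distr M M (f ^^ Suc n) = distr M M ((f ^^ n) \<circ> f)" by (simp only: funpow_Suc_right)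
  also have "\<dots> = distr (distr M M f) M (f ^^ n)"
    using distr_distr[OF funpow_meas[OF f] f] by simp
  also have "\<dots> = M" using d Suc by simp
  finally show ?case .
qed

lemma AE_pres_pow:
  assumes f: "f \<in> measurable M M" and d: "distr M M f = M" and ae: "AE x in M. P x"
  shows "AE x in M. \<forall>n. P ((f ^^ n) x)"
  using AE_pres[OF funpow_meas[OF f] distr_pow[OF f d] ae]
  by (subst AE_all_countable) auto

lemma recur:
  assumes ps: "prob_space M" and f: "f \<in> measurable M M" and d: "distr M M f = M"
    and erg: "\<forall>A\<in>sets M. f -` A \<inter> space M = A \<longrightarrow> measure M A = 0 \<or> measure M A = 1"
    and B: "B \<in> sets M" "measure M B > 0"
  shows "AE x in M. \<forall>m. \<exists>n\<ge>m. (f ^^ n) x \<in> B"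
proof -
  interpret prob_space M by (rule ps)
  define U where "U m = {x \<in> space M. \<exists>n\<ge>m. (f ^^ n) x \<in> B}" for m
  have Ueq: "U m = (\<Union>n\<in>{m..}. (f ^^ n) -` B \<inter> space M)" for m
    unfolding U_def by auto
  have Us: "U m \<in> sets M" for m
    unfolding Ueq using measurable_sets[OF funpow_meas[OF f] B(1)]
    by (intro sets.countable_UN') auto
  have pre: "f -` U m \<inter> space M = U (Suc m)" for m
  proof -
    have "x \<in> f -` U m \<inter> space M \<longleftrightarrow> x \<in> U (Suc m)" for x
    proof
      assume "x \<in> f -` U m \<inter> space M"
      then obtain n where "n \<ge> m" "(f ^^ n) (f x) \<in> B" "x \<in> space M" unfolding U_def by auto
      then show "x \<in> U (Suc m)" unfolding U_def
        by (intro CollectI conjI exI[of _ "Suc n"]) (auto simp: funpow_swap1)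
    next
      assume "x \<in> U (Suc m)"
      then obtain n where n: "n \<ge> Suc m" "(f ^^ n) x \<in> B" "x \<in> space M" unfolding U_def by auto
      then obtain k where k: "n = Suc k" by (cases n) auto
      have "(f ^^ k) (f x) \<in> B" using n k by (simp add: funpow_swap1)
      then show "x \<in> f -` U m \<inter> space M" unfolding U_def using n k f
        by (auto dest: measurable_space)
    qed
    then show ?thesis by blast
  qed
  have mU: "measure M (U m) = measure M (U 0)" for m
  proof (induction m)
    case (Suc m)
    have "measure M (U (Suc m)) = measure (distr M M f) (U m)"
      using measure_distr[OF f Us[of m]] pre by simp
    then show ?case using d Suc by simp
  qed simp
  have dec: "decseq U" unfolding decseq_def U_def by (auto intro: order_trans)
  have lim: "(\<lambda>m. measure M (U m)) \<longlonglongrightarrow> measure M (\<Inter>m. U m)"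
    by (rule finite_Lim_measure_decseq) (use Us dec in auto)
  moreover have "(\<lambda>m. measure M (U m)) = (\<lambda>m. measure M (U 0))" using mU by (intro ext)
  ultimately have "(\<lambda>m. measure M (U 0)) \<longlonglongrightarrow> measure M (\<Inter>m. U m)"
    by (simp only:)
  then have "measure M (\<Inter>m. U m) = measure M (U 0)"
    by (simp add: LIMSEQ_const_iff)
  moreover have "measure M B \<le> measure M (U 0)"
  proof (rule finite_measure_mono)
    show "B \<subseteq> U 0" using sets.sets_into_space[OF B(1)] unfolding U_def
      by (auto intro!: exI[of _ 0])
  qed (rule Us)
  ultimately have pos: "measure M (\<Inter>m. U m) > 0" using B by simp
  have Cs: "(\<Inter>m. U m) \<in> sets M" using Us by auto
  have "f -` (\<Inter>m. U m) \<inter> space M = (\<Inter>m. U (Suc m))" using pre by blast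
  also have "\<dots> = (\<Inter>m. U m)"
  proof
    show "(\<Inter>m. U (Suc m)) \<subseteq> (\<Inter>m. U m)"
    proof
      fix x assume x: "x \<in> (\<Inter>m. U (Suc m))"
      have "x \<in> U m" for m using x dec[unfolded decseq_Suc_iff] by blast
      then show "x \<in> (\<Inter>m. U m)" by blast
    qed
  qed blast
  finally have "measure M (\<Inter>m. U m) = 1" using erg Cs pos by auto
  then have "AE x in M. x \<in> (\<Inter>m. U m)" by (rule AE_prob_1)
  then show ?thesis by (rule AE_mp) (auto simp: U_def intro!: AE_I2)
qed


locale rsft =
  fixes M :: "'w measure" and th :: "'w \<Rightarrow> 'w" and l :: "'w \<Rightarrow> enat"
    and Amat :: "'w \<Rightarrow> nat \<Rightarrow> nat \<Rightarrow> bool"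
  assumes setting: "rsft_setting M th l Amat" and bip: "bip_property M th l Amat"
begin

abbreviation "ti \<equiv> thinv M th"

lemma ps: "prob_space M" using setting by (simp add: rsft_setting_def invertible_mp_ergodic_def)
sublocale prob_space M by (rule ps)

lemma bij: "bij_betw th (space M) (space M)" and thM[measurable]: "th \<in> measurable M M"
  and tim[measurable]: "ti \<in> measurable M M" and thd: "distr M M th = M"
  and erg: "\<forall>A\<in>sets M. th -` A \<inter> space M = A \<longrightarrow> measure M A = 0 \<or> measure M A = 1"
  and lm[measurable]: "l \<in> measurable M (count_space UNIV)"
  and Asets: "\<And>i j. {w\<in>space M. Amat w i j} \<in> sets M"
  and rows: "AE w in M. \<forall>i. enat i < l w \<longrightarrow> (\<exists>j. enat j < l (th w) \<and> Amat w i j)"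
  using setting by (auto simp: rsft_setting_def invertible_mp_ergodic_def)

lemma Apred[measurable]: "Measurable.pred M (\<lambda>w. Amat w i j)"
  using Asets[of i j] by (simp add: pred_def)

lemma th_sp: "w \<in> space M \<Longrightarrow> th w \<in> space M" using thM by (rule measurable_space)
lemma ti_sp: "w \<in> space M \<Longrightarrow> ti w \<in> space M" using tim by (rule measurable_space)
lemma th_ti: "w \<in> space M \<Longrightarrow> th (ti w) = w"
  unfolding thinv_def using bij by (simp add: bij_betw_inv_into_right)
lemma ti_th: "w \<in> space M \<Longrightarrow> ti (th w) = w"
  unfolding thinv_def using bij by (simp add: bij_betw_def)

lemma thn_sp: "w \<in> space M \<Longrightarrow> (th ^^ n) w \<in> space M"
  by (induction n) (auto intro: th_sp)
lemma tin_sp: "w \<in> space M \<Longrightarrow> (ti ^^ n) w \<in> space M"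
  by (induction n) (auto intro: ti_sp)

lemma th_tin: "w \<in> space M \<Longrightarrow> i \<le> n \<Longrightarrow> (th ^^ i) ((ti ^^ n) w) = (ti ^^ (n - i)) w"
proof (induction i)
  case (Suc i)
  then have "(th ^^ Suc i) ((ti ^^ n) w) = th ((ti ^^ (n - i)) w)" by simp
  also have "n - i = Suc (n - Suc i)" using Suc by simp
  also have "th ((ti ^^ Suc (n - Suc i)) w) = (ti ^^ (n - Suc i)) w"
    using Suc by (simp add: th_ti tin_sp)
  finally show ?case .
qed simp

lemma ti_thn: "w \<in> space M \<Longrightarrow> i \<le> n \<Longrightarrow> (ti ^^ i) ((th ^^ n) w) = (th ^^ (n - i)) w"
proof (induction i)
  case (Suc i)
  then have "(ti ^^ Suc i) ((th ^^ n) w) = ti ((th ^^ (n - i)) w)" by simp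
  also have "n - i = Suc (n - Suc i)" using Suc by simp
  also have "ti ((th ^^ Suc (n - Suc i)) w) = (th ^^ (n - Suc i)) w"
    using Suc by (simp add: ti_th thn_sp)
  finally show ?case .
qed simp

lemma thn_add: "(th ^^ i) ((th ^^ j) w) = (th ^^ (i + j)) w"
  by (simp add: funpow_add)

lemma tid: "distr M M ti = M"
proof (rule measure_eqI)
  fix A assume A: "A \<in> sets (distr M M ti)"
  then have A': "A \<in> sets M" by simp
  have s: "ti -` A \<inter> space M \<in> sets M" using A' by measurable
  have "th -` (ti -` A \<inter> space M) \<inter> space M = A"
    using sets.sets_into_space[OF A'] by (auto simp: ti_th th_sp)
  then have "emeasure M A = emeasure (distr M M th) (ti -` A \<inter> space M)"
    using emeasure_distr[OF thM s] by simp
  also have "\<dots> = emeasure M (ti -` A \<inter> space M)" using thd by simp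
  finally show "emeasure (distr M M ti) A = emeasure M A"
    using emeasure_distr[OF tim A'] by simp
qed simp

lemma tierg: "\<forall>A\<in>sets M. ti -` A \<inter> space M = A \<longrightarrow> measure M A = 0 \<or> measure M A = 1"
proof (intro ballI impI)
  fix A assume A: "A \<in> sets M" and inv: "ti -` A \<inter> space M = A"
  have "th -` A \<inter> space M = A"
  proof (intro set_eqI iffI)
    fix x assume "x \<in> th -` A \<inter> space M"
    then have "th x \<in> ti -` A \<inter> space M" "x \<in> space M" using inv by auto
    then show "x \<in> A" by (simp add: ti_th)
  next
    fix x assume x: "x \<in> A"
    then have xs: "x \<in> space M" using sets.sets_into_space[OF A] by auto
    have "ti (th x) \<in> A" using x xs by (simp add: ti_th)
    then have "th x \<in> ti -` A \<inter> space M" using xs th_sp by auto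
    then show "x \<in> th -` A \<inter> space M" using inv xs by auto
  qed
  then show "measure M A = 0 \<or> measure M A = 1" using erg A by auto
qed


definition pth :: "'w \<Rightarrow> (nat \<Rightarrow> nat) \<Rightarrow> nat \<Rightarrow> bool" where
  "pth w x n \<longleftrightarrow> (\<forall>i\<le>n. enat (x i) < l ((th ^^ i) w)) \<and>
      (\<forall>i<n. Amat ((th ^^ i) w) (x i) (x (Suc i)))"

lemma pth_words:
  assumes "0 < n" "pth w x n"
  shows "words_ab th l Amat n w (x 0) (x n) \<noteq> {}"
proof -
  define u where "u = map x [0..<n]"
  have lu: "length u = n" by (simp add: u_def)
  have ne: "u \<noteq> []" using assms(1) by (simp add: u_def)
  have hd: "hd u = x 0" using assms(1) by (simp add: u_def hd_map)
  have la: "last u = x (n - 1)" using assms(1) by (simp add: u_def last_map)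
  have adm: "admissible th l Amat w u"
    using assms(2) unfolding admissible_def pth_def u_def by auto
  have e: "Amat ((th ^^ (n - 1)) w) (x (n - 1)) (x n)"
  proof -
    have "n - 1 < n" using assms(1) by simp
    then have "Amat ((th ^^ (n - 1)) w) (x (n - 1)) (x (Suc (n - 1)))"
      using assms(2) unfolding pth_def by blast
    moreover have "Suc (n - 1) = n" using assms(1) by simp
    ultimately show ?thesis by simp
  qed
  have "u \<in> words_ab th l Amat n w (x 0) (x n)"
    unfolding words_ab_def words_def using lu ne hd la adm e by simp
  then show ?thesis by blast
qed

lemma pth_shift:
  assumes "pth w x n" "j \<le> n"
  shows "pth ((th ^^ j) w) (\<lambda>i. x (i + j)) (n - j)"
  using assms unfolding pth_def by (auto simp: thn_add)

lemma pth_concat: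
  assumes y: "pth w y m" and x: "pth ((th ^^ Suc m) w) x k"
    and e: "Amat ((th ^^ m) w) (y m) (x 0)"
  shows "pth w (\<lambda>i. if i \<le> m then y i else x (i - Suc m)) (Suc m + k)"
  unfolding pth_def
proof (intro conjI allI impI)
  fix i assume i: "i \<le> Suc m + k"
  show "enat (if i \<le> m then y i else x (i - Suc m)) < l ((th ^^ i) w)"
  proof (cases "i \<le> m")
    case True then show ?thesis using y unfolding pth_def by auto
  next
    case False
    define j where "j = i - Suc m"
    have j: "i = j + Suc m" "j \<le> k" using i False unfolding j_def by arith+
    have "enat (x j) < l ((th ^^ j) ((th ^^ Suc m) w))" using x j unfolding pth_def by blast
    moreover have "(th ^^ j) ((th ^^ Suc m) w) = (th ^^ i) w" by (simp only: thn_add j)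
    moreover have "i - Suc m = j" using j by simp
    ultimately show ?thesis using False by simp
  qed
next
  fix i assume i: "i < Suc m + k"
  show "Amat ((th ^^ i) w) (if i \<le> m then y i else x (i - Suc m))
          (if Suc i \<le> m then y (Suc i) else x (Suc i - Suc m))"
  proof (cases "Suc i \<le> m")
    case True then show ?thesis using y unfolding pth_def by auto
  next
    case False
    show ?thesis
    proof (cases "i = m")
      case True then show ?thesis using e by simp
    next
      case False2: False
      define j where "j = i - Suc m"
      have j: "i = j + Suc m" "j < k" using i False False2 unfolding j_def by arith+
      have "Suc i - Suc m = Suc j" "i - Suc m = j" using j by simp_all
      moreover have "Amat ((th ^^ j) ((th ^^ Suc m) w)) (x j) (x (Suc j))" using x j unfolding pth_def by blast
      moreover have "(th ^^ j) ((th ^^ Suc m) w) = (th ^^ i) w" by (simp only: thn_add j)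
      ultimately show ?thesis using j by simp
    qed
  qed
qed

lemma Om1: "w \<in> Omega_w M th l Amat [a] \<longleftrightarrow> w \<in> space M \<and> enat a < l w"
  by (auto simp: Omega_w_def admissible_def)

lemma Om1_sets: "Omega_w M th l Amat [a] \<in> sets M"
proof -
  have "Omega_w M th l Amat [a] = l -` {x. enat a < x} \<inter> space M" using Om1 by auto
  then show ?thesis using measurable_sets[OF lm, of "{x. enat a < x}"] by simp
qed

lemma mix:
  assumes "in_W1 M th l Amat a" "in_W1 M th l Amat b"
  shows "\<exists>N. N \<in> measurable M (count_space UNIV) \<and> (\<forall>w\<in>space M. enat a < l w \<longrightarrow>
     (\<forall>n\<ge>N w. enat b < l ((th ^^ n) w) \<longrightarrow> (\<exists>x. pth w x n \<and> x 0 = a \<and> x n = b)))"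
proof -
  from bip assms obtain N where N: "N \<in> measurable M (count_space UNIV)"
    "\<forall>w \<in> Omega_w M th l Amat [a]. \<forall>n \<ge> N w.
              (th ^^ n) w \<in> Omega_w M th l Amat [b] \<longrightarrow>
              cylinder th l Amat w [a] \<inter> (shiftn n -` cylinder th l Amat ((th ^^ n) w) [b]) \<noteq> {}"
    unfolding bip_property_def top_mixing_def by blast
  show ?thesis
  proof (intro exI[of _ N] conjI ballI impI allI)
    fix w n assume w: "w \<in> space M" "enat a < l w" and n: "N w \<le> n"
      and b: "enat b < l ((th ^^ n) w)"
    then obtain x where x: "x \<in> cylinder th l Amat w [a]"
      "shiftn n x \<in> cylinder th l Amat ((th ^^ n) w) [b]"
      using N(2) Om1 thn_sp by blast
    have "pth w x n" using x(1) unfolding cylinder_def fibre_def pth_def by auto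
    moreover have "x 0 = a" using x(1) unfolding cylinder_def by auto
    moreover have "x n = b" using x(2) unfolding cylinder_def shiftn_def by auto
    ultimately show "\<exists>x. pth w x n \<and> x 0 = a \<and> x n = b" by blast
  qed (rule N(1))
qed

definition mixP :: "nat \<Rightarrow> nat \<Rightarrow> ('w \<Rightarrow> nat) \<Rightarrow> bool" where
  "mixP a b N \<longleftrightarrow> N \<in> measurable M (count_space UNIV) \<and> (\<forall>w\<in>space M. enat a < l w \<longrightarrow>
     (\<forall>n\<ge>N w. enat b < l ((th ^^ n) w) \<longrightarrow> (\<exists>x. pth w x n \<and> x 0 = a \<and> x n = b)))"

definition Nm :: "nat \<Rightarrow> nat \<Rightarrow> 'w \<Rightarrow> nat" where
  "Nm a b = (if in_W1 M th l Amat a \<and> in_W1 M th l Amat b then (SOME N. mixP a b N) else (\<lambda>_. 0))"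

lemma Nm_mixP:
  assumes "in_W1 M th l Amat a" "in_W1 M th l Amat b"
  shows "mixP a b (Nm a b)"
proof -
  have "Nm a b = (SOME N. mixP a b N)" unfolding Nm_def using assms by (intro if_P) simp
  moreover have "\<exists>N. mixP a b N" using mix[OF assms] unfolding mixP_def .
  ultimately show ?thesis using someI_ex by metis
qed

lemma Nm_meas[measurable]: "Nm a b \<in> measurable M (count_space UNIV)"
proof (cases "in_W1 M th l Amat a \<and> in_W1 M th l Amat b")
  case True
  then show ?thesis using Nm_mixP[of a b] unfolding mixP_def by blast
next
  case False
  then have "Nm a b = (\<lambda>_. 0)" unfolding Nm_def by (rule if_not_P)
  then show ?thesis by simp
qed

lemma Nm_prop:
  assumes "in_W1 M th l Amat a" "in_W1 M th l Amat b" "w \<in> space M" "enat a < l w"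
    "Nm a b w \<le> n" "enat b < l ((th ^^ n) w)"
  shows "\<exists>x. pth w x n \<and> x 0 = a \<and> x n = b"
proof -
  have "\<forall>w\<in>space M. enat a < l w \<longrightarrow>
     (\<forall>n\<ge>Nm a b w. enat b < l ((th ^^ n) w) \<longrightarrow> (\<exists>x. pth w x n \<and> x 0 = a \<and> x n = b))"
    using Nm_mixP[OF assms(1,2)] unfolding mixP_def by (rule conjunct2)
  then show ?thesis using assms(3-6) by blast
qed

lemma notW1:
  assumes "\<not> in_W1 M th l Amat b"
  shows "AE w in M. \<not> enat b < l w"
proof -
  have "measure M (Omega_w M th l Amat [b]) = 0"
    using assms measure_nonneg[of M] unfolding in_W1_def by (meson not_less order.antisym)
  then have "Omega_w M th l Amat [b] \<in> null_sets M"
    using Om1_sets by (simp add: emeasure_eq_measure null_sets_def)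
  from AE_not_in[OF this] show ?thesis by (rule AE_mp) (auto simp: Om1 intro!: AE_I2)
qed

lemma notW1_orbits:
  "AE w in M. (\<forall>n d. \<not> in_W1 M th l Amat d \<longrightarrow> \<not> enat d < l ((th ^^ n) w)) \<and>
              (\<forall>n d. \<not> in_W1 M th l Amat d \<longrightarrow> \<not> enat d < l ((ti ^^ n) w))"
proof -
  have a: "AE w in M. \<forall>d. \<not> in_W1 M th l Amat d \<longrightarrow> \<not> enat d < l w"
  proof (subst AE_all_countable, intro allI)
    fix d show "AE w in M. \<not> in_W1 M th l Amat d \<longrightarrow> \<not> enat d < l w"
    proof (cases "in_W1 M th l Amat d")
      case False then show ?thesis using notW1[OF False] by simp
    qed simp
  qed
  show ?thesis using AE_pres_pow[OF thM thd a] AE_pres_pow[OF tim tid a] by eventually_elim auto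
qed


lemma pos_union:
  assumes S: "S \<in> sets M" "measure M S > 0" and A: "\<And>K. A K \<in> sets M"
    and sub: "S \<subseteq> (\<Union>K::nat. A K)"
  shows "\<exists>K. measure M (A K) > 0"
proof (rule ccontr)
  assume "\<not> ?thesis"
  then have "measure M (A K) = 0" for K using measure_nonneg[of M "A K"] by (meson not_less order.antisym)
  then have "A K \<in> null_sets M" for K using A by (simp add: emeasure_eq_measure null_sets_def)
  then have "(\<Union>K. A K) \<in> null_sets M" by auto
  then have "S \<in> null_sets M" using S(1) sub by (rule null_sets_subset)
  then show False using S(2) by (simp add: null_sets_def emeasure_eq_measure)
qed

lemma depth:
  assumes a: "in_W1 M th l Amat a"
  shows "AE w in M. \<forall>b k. enat b < l w \<longrightarrow> (\<exists>x. pth ((ti ^^ k) w) x k \<and> x k = b)"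
proof (subst AE_all_countable, intro allI, subst AE_all_countable, intro allI)
  fix b k
  show "AE w in M. enat b < l w \<longrightarrow> (\<exists>x. pth ((ti ^^ k) w) x k \<and> x k = b)"
  proof (cases "in_W1 M th l Amat b")
    case False
    show ?thesis using notW1[OF False] by (rule AE_mp) (auto intro!: AE_I2)
  next
    case b: True
    define A where "A L = {w\<in>space M. enat a < l w \<and> Nm a b w \<le> L}" for L
    have As: "A L \<in> sets M" for L unfolding A_def by measurable
    have "\<exists>L. measure M (A L) > 0"
    proof (rule pos_union[OF Om1_sets])
      show "measure M (Omega_w M th l Amat [a]) > 0" using a by (simp add: in_W1_def)
      show "Omega_w M th l Amat [a] \<subseteq> (\<Union>L. A L)" unfolding A_def by (auto simp: Om1)
    qed (rule As)
    then obtain L where L: "measure M (A L) > 0" by blast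
    have rec: "AE w in M. \<forall>m. \<exists>n\<ge>m. (ti ^^ n) w \<in> A L"
      by (rule recur[OF ps tim tid tierg As L])
    show ?thesis using rec AE_space
    proof eventually_elim
      case (elim om)
      show ?case
      proof
        assume bl: "enat b < l om"
        obtain n where n: "n \<ge> max k L" "(ti ^^ n) om \<in> A L" using elim by blast
        define w where "w = (ti ^^ n) om"
        have w: "w \<in> space M" "enat a < l w" "Nm a b w \<le> n"
          using n unfolding w_def A_def by auto
        have thw: "(th ^^ n) w = om" unfolding w_def using th_tin[OF elim(2), of n n] by simp
        obtain x where x: "pth w x n" "x 0 = a" "x n = b"
          using Nm_prop[OF a b w(1,2) w(3)] bl thw by auto
        have "pth ((th ^^ (n - k)) w) (\<lambda>i. x (i + (n - k))) (n - (n - k))"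
          using pth_shift[OF x(1), of "n - k"] by simp
        moreover have "n - (n - k) = k" using n by simp
        moreover have "(th ^^ (n - k)) w = (ti ^^ k) om"
          unfolding w_def using th_tin[OF elim(2), of "n - k" n] n by simp
        moreover have "x (k + (n - k)) = b" using n x(3) by simp
        ultimately show "\<exists>x. pth ((ti ^^ k) om) x k \<and> x k = b" by auto
      qed
    qed
  qed
qed

definition G :: "nat \<Rightarrow> 'w set" where
  "G K = {w\<in>space M. \<forall>c. enat c < l w \<longrightarrow> (\<exists>d\<le>K. enat d < l (ti w) \<and> Amat (ti w) d c)}"
definition G' :: "nat \<Rightarrow> 'w set" where
  "G' K = {w\<in>space M. \<forall>c. enat c < l (ti w) \<longrightarrow> (\<exists>d\<le>K. enat d < l w \<and> Amat (ti w) c d)}"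

lemma G_sets: "G K \<in> sets M" unfolding G_def by measurable
lemma G'_sets: "G' K \<in> sets M" unfolding G'_def by measurable

lemma G_pos: "\<exists>K. measure M (G K) > 0"
proof -
  from bip obtain Obp I where O: "Obp \<in> sets M" "measure M Obp > 0"
    "\<forall>w \<in> Obp. finite (I w) \<and> (\<forall>b \<in> I w. enat b < l (ti w)) \<and>
          (\<forall>c. enat c < l w \<longrightarrow> (\<exists>b \<in> I w. Amat (ti w) b c))"
    unfolding bip_property_def big_preimage_def by blast
  show ?thesis
  proof (rule pos_union[OF O(1,2) G_sets])
    show "Obp \<subseteq> (\<Union>K. G K)"
    proof
      fix w assume w: "w \<in> Obp"
      then have ws: "w \<in> space M" using sets.sets_into_space[OF O(1)] by auto
      obtain K where K: "\<forall>b\<in>I w. b \<le> K" using O(3) w finite_nat_set_iff_bounded_le by blast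
      have "w \<in> G K" unfolding G_def using ws O(3) w K by fastforce
      then show "w \<in> (\<Union>K. G K)" by blast
    qed
  qed
qed

lemma G'_pos: "\<exists>K. measure M (G' K) > 0"
proof -
  from bip obtain Obi I where O: "Obi \<in> sets M" "measure M Obi > 0"
    "\<forall>w \<in> Obi. finite (I w) \<and> (\<forall>b \<in> I w. enat b < l w) \<and>
          (\<forall>c. enat c < l (ti w) \<longrightarrow> (\<exists>b \<in> I w. Amat (ti w) c b))"
    unfolding bip_property_def big_image_def by blast
  show ?thesis
  proof (rule pos_union[OF O(1,2) G'_sets])
    show "Obi \<subseteq> (\<Union>K. G' K)"
    proof
      fix w assume w: "w \<in> Obi"
      then have ws: "w \<in> space M" using sets.sets_into_space[OF O(1)] by auto
      obtain K where K: "\<forall>b\<in>I w. b \<le> K" using O(3) w finite_nat_set_iff_bounded_le by blast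
      have "w \<in> G' K" unfolding G'_def using ws O(3) w K by fastforce
      then show "w \<in> (\<Union>K. G' K)" by blast
    qed
  qed
qed


lemma part1:
  assumes a: "in_W1 M th l Amat a"
  shows "AE w in M. w \<in> space M \<and> enat a < l w \<longrightarrow>
    (\<exists>al. \<forall>n\<ge>al. \<forall>b. enat b < l ((th ^^ n) w) \<longrightarrow> words_ab th l Amat n w a b \<noteq> {})"
proof -
  obtain K where K: "measure M (G K) > 0" using G_pos by blast
  have rec: "AE w in M. \<forall>m. \<exists>n\<ge>m. (th ^^ n) w \<in> G K"
    by (rule recur[OF ps thM thd erg G_sets K])
  have dep: "AE w in M. \<forall>n. \<forall>b k. enat b < l ((th ^^ n) w) \<longrightarrow>
      (\<exists>x. pth ((ti ^^ k) ((th ^^ n) w)) x k \<and> x k = b)"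
    by (rule AE_pres_pow[OF thM thd depth[OF a]])
  show ?thesis using rec dep notW1_orbits AE_space
  proof eventually_elim
    case (elim w)
    show ?case
    proof
      assume wa: "w \<in> space M \<and> enat a < l w"
      define Ns where "Ns = (\<Sum>d\<le>K. Nm a d w)"
      obtain t0 where t0: "t0 \<ge> Suc Ns" "(th ^^ t0) w \<in> G K" using elim(1) by blast
      show "\<exists>al. \<forall>n\<ge>al. \<forall>b. enat b < l ((th ^^ n) w) \<longrightarrow> words_ab th l Amat n w a b \<noteq> {}"
      proof (intro exI[of _ t0] allI impI)
        fix n b assume n: "t0 \<le> n" and b: "enat b < l ((th ^^ n) w)"
        define k where "k = n - t0"
        obtain x where x: "pth ((ti ^^ k) ((th ^^ n) w)) x k" "x k = b"
          using elim(2) b by blast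
        have "(ti ^^ k) ((th ^^ n) w) = (th ^^ t0) w"
          using ti_thn[OF elim(4), of k n] n unfolding k_def by simp
        then have x1: "pth ((th ^^ t0) w) x k" using x(1) by simp
        then have x0: "enat (x 0) < l ((th ^^ t0) w)" unfolding pth_def by auto
        define m where "m = t0 - 1"
        have tm: "t0 = Suc m" using t0 unfolding m_def by simp
        have tim1: "ti ((th ^^ t0) w) = (th ^^ m) w"
          using ti_thn[OF elim(4), of 1 t0] tm by simp
        obtain d where d: "d \<le> K" "enat d < l ((th ^^ m) w)" "Amat ((th ^^ m) w) d (x 0)"
          using t0(2) x0 tim1 unfolding G_def by force
        have dW: "in_W1 M th l Amat d" using elim(3) d(2) by blast
        have "Nm a d w \<le> Ns" unfolding Ns_def using d(1) by (intro member_le_sum) auto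
        then have "Nm a d w \<le> m" using t0 tm by simp
        then obtain y where y: "pth w y m" "y 0 = a" "y m = d"
          using Nm_prop[OF a dW] wa d(2) by blast
        have z: "pth w (\<lambda>i. if i \<le> m then y i else x (i - Suc m)) (Suc m + k)"
          by (rule pth_concat[OF y(1)]) (use x1 tm d(3) y(3) in simp_all)
        have nk: "Suc m + k = n" using n tm unfolding k_def by simp
        have "words_ab th l Amat n w ((\<lambda>i. if i \<le> m then y i else x (i - Suc m)) 0)
             ((\<lambda>i. if i \<le> m then y i else x (i - Suc m)) n) \<noteq> {}"
          by (rule pth_words) (use z nk in auto)
        moreover have "\<not> n \<le> m" "n - Suc m = k" using nk by auto
        ultimately show "words_ab th l Amat n w a b \<noteq> {}" using y(2) x(2) by simp
      qed
    qed
  qed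
qed

lemma fwd:
  assumes "\<forall>i<s. \<forall>c. enat c < l ((th ^^ i) v) \<longrightarrow> (\<exists>e. enat e < l (th ((th ^^ i) v)) \<and> Amat ((th ^^ i) v) c e)"
    and "enat b < l v"
  shows "\<exists>y. pth v y s \<and> y 0 = b"
  using assms
proof (induction s)
  case 0
  then show ?case by (intro exI[of _ "\<lambda>_. b"]) (simp add: pth_def)
next
  case (Suc s)
  then obtain y where y: "pth v y s" "y 0 = b" by auto
  have "enat (y s) < l ((th ^^ s) v)" using y(1) unfolding pth_def by auto
  then obtain e where e: "enat e < l (th ((th ^^ s) v))" "Amat ((th ^^ s) v) (y s) e"
    using Suc.prems(1) by blast
  have "pth v (y(Suc s := e)) (Suc s)"
    using y(1) e unfolding pth_def by (auto simp: le_Suc_eq less_Suc_eq)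
  moreover have "(y(Suc s := e)) 0 = b" using y(2) by simp
  ultimately show ?case by blast
qed

lemma part2:
  assumes a: "in_W1 M th l Amat a"
  shows "AE w in M. w \<in> space M \<and> enat a < l w \<longrightarrow>
    (\<exists>be. \<forall>n\<ge>be. \<forall>b. enat b < l ((ti ^^ n) w) \<longrightarrow> words_ab th l Amat n ((ti ^^ n) w) b a \<noteq> {})"
proof -
  obtain K where K: "measure M (G' K) > 0" using G'_pos by blast
  define H where "H L = {w \<in> G' K. \<forall>d\<le>K. Nm d a w \<le> L}" for L
  have Hs: "H L \<in> sets M" for L
  proof -
    have "H L = G' K \<inter> {w\<in>space M. \<forall>d\<le>K. Nm d a w \<le> L}"
      unfolding H_def using sets.sets_into_space[OF G'_sets] by auto
    moreover have "{w\<in>space M. \<forall>d\<le>K. Nm d a w \<le> L} \<in> sets M" by measurable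
    ultimately show ?thesis using G'_sets by simp
  qed
  have "\<exists>L. measure M (H L) > 0"
  proof (rule pos_union[OF G'_sets K Hs])
    show "G' K \<subseteq> (\<Union>L. H L)"
    proof
      fix w assume w: "w \<in> G' K"
      have "w \<in> H (\<Sum>d\<le>K. Nm d a w)" unfolding H_def using w
        by (auto intro!: member_le_sum)
      then show "w \<in> (\<Union>L. H L)" by blast
    qed
  qed
  then obtain L where L: "measure M (H L) > 0" by blast
  have rec: "AE w in M. \<forall>m. \<exists>n\<ge>m. (ti ^^ n) w \<in> H L"
    by (rule recur[OF ps tim tid tierg Hs L])
  have rw: "AE w in M. \<forall>n. \<forall>i. enat i < l ((ti ^^ n) w) \<longrightarrow>
      (\<exists>j. enat j < l (th ((ti ^^ n) w)) \<and> Amat ((ti ^^ n) w) i j)"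
    by (rule AE_pres_pow[OF tim tid rows])
  show ?thesis using rec rw notW1_orbits AE_space
  proof eventually_elim
    case (elim w)
    show ?case
    proof
      assume wa: "w \<in> space M \<and> enat a < l w"
      obtain j where j: "j \<ge> Suc L" "(ti ^^ j) w \<in> H L" using elim(1) by blast
      define om where "om = (ti ^^ j) w"
      have om: "om \<in> G' K" "\<forall>d\<le>K. Nm d a om \<le> L" "om \<in> space M"
        using j(2) unfolding om_def H_def G'_def by auto
      show "\<exists>be. \<forall>n\<ge>be. \<forall>b. enat b < l ((ti ^^ n) w) \<longrightarrow> words_ab th l Amat n ((ti ^^ n) w) b a \<noteq> {}"
      proof (intro exI[of _ "Suc j"] allI impI)
        fix n b assume n: "Suc j \<le> n" and b: "enat b < l ((ti ^^ n) w)"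
        define v where "v = (ti ^^ n) w"
        define s where "s = n - Suc j"
        have thv: "(th ^^ i) v = (ti ^^ (n - i)) w" if "i \<le> n" for i
          unfolding v_def using th_tin[OF elim(4) that] .
        have hyp: "\<forall>i<s. \<forall>c. enat c < l ((th ^^ i) v) \<longrightarrow>
            (\<exists>e. enat e < l (th ((th ^^ i) v)) \<and> Amat ((th ^^ i) v) c e)"
        proof (intro allI impI)
          fix i c assume i: "i < s" and c: "enat c < l ((th ^^ i) v)"
          have "(th ^^ i) v = (ti ^^ (n - i)) w" using i unfolding s_def by (intro thv) simp
          then show "\<exists>e. enat e < l (th ((th ^^ i) v)) \<and> Amat ((th ^^ i) v) c e"
            using elim(2) c by simp
        qed
        obtain y where y: "pth v y s" "y 0 = b" using fwd[OF hyp] b unfolding v_def by blast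
        have ys: "enat (y s) < l ((th ^^ s) v)" using y(1) unfolding pth_def by auto
        have "(th ^^ s) v = (ti ^^ (Suc j)) w" using thv[of s] n unfolding s_def by simp
        then have tsv: "(th ^^ s) v = ti om" unfolding om_def by simp
        obtain d where d: "d \<le> K" "enat d < l om" "Amat (ti om) (y s) d"
          using om(1) ys tsv unfolding G'_def by force
        have dW: "in_W1 M th l Amat d" using elim(3) d(2) unfolding om_def by blast
        have Nd: "Nm d a om \<le> j" using om(2) d(1) j(1) by fastforce
        have thom: "(th ^^ j) om = w" unfolding om_def using th_tin[OF elim(4), of j j] by simp
        obtain x where x: "pth om x j" "x 0 = d" "x j = a"
          using Nm_prop[OF dW a om(3) d(2) Nd] thom wa by auto
        have tsv2: "(th ^^ Suc s) v = om"
          using thv[of "Suc s"] n unfolding s_def om_def by simp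
        have z: "pth v (\<lambda>i. if i \<le> s then y i else x (i - Suc s)) (Suc s + j)"
          by (rule pth_concat[OF y(1)]) (use x tsv2 tsv d(3) in simp_all)
        have nk: "Suc s + j = n" using n unfolding s_def by simp
        have "words_ab th l Amat n v ((\<lambda>i. if i \<le> s then y i else x (i - Suc s)) 0)
             ((\<lambda>i. if i \<le> s then y i else x (i - Suc s)) n) \<noteq> {}"
          by (rule pth_words) (use z nk in auto)
        moreover have "\<not> n \<le> s" "n - Suc s = j" using nk by auto
        ultimately show "words_ab th l Amat n ((ti ^^ n) w) b a \<noteq> {}"
          using y(2) x(3) unfolding v_def by simp
      qed
    qed
  qed
qed

end

theorem lemma3p2:
  fixes M :: "'w measure" and th :: "'w \<Rightarrow> 'w" and l :: "'w \<Rightarrow> enat"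
    and Amat :: "'w \<Rightarrow> nat \<Rightarrow> nat \<Rightarrow> bool" and a :: nat
  assumes "rsft_setting M th l Amat"
    and "bip_property M th l Amat"
    and "in_W1 M th l Amat a"
  shows "AE w in M. w \<in> Omega_w M th l Amat [a] \<longrightarrow>
           (\<exists>al be :: nat.
              (\<forall>n \<ge> al. \<forall>b. enat b < l ((th ^^ n) w) \<longrightarrow> words_ab th l Amat n w a b \<noteq> {}) \<and>
              (\<forall>n \<ge> be. \<forall>b. enat b < l ((thinv M th ^^ n) w) \<longrightarrow>
                   words_ab th l Amat n ((thinv M th ^^ n) w) b a \<noteq> {}))"
proof -
  interpret rsft M th l Amat using assms(1,2) by unfold_locales
  show ?thesis using part1[OF assms(3)] part2[OF assms(3)]
  proof eventually_elim
    case (elim w)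
    then show ?case by (auto simp: Om1)
  qed
qed

end
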